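(* Consider the following interactive optimization problem with a single unknown knapsack constraint. Given $n$, a known objective vector $\boldsymbol{v} \in \mathbb{R}^n$ and a known set $X \subseteq \{0,1\}^n$, one wants to solve $$\max\ \boldsymbol{v}\cdot\boldsymbol{x} \quad \text{s.t.}\quad \bar{\boldsymbol{w}}\cdot \boldsymbol{x} \le 1,\ \ \boldsymbol{x}\in X,$$ where the weight vector $\bar{\boldsymbol{w}} \in [0,1]^n$ is unknown to the algorithm; the only access to $\bar{\boldsymbol{w}}$ is through a membership oracle which, given $\boldsymbol{\chi}\in X$, answers (with certainty) whether $\bar{\boldsymbol{w}}\cdot\boldsymbol{\chi}\le 1$. Calling the oracle on a point is called labeling that point. Then for any deterministic algorithm for this problem and any $\epsilon\in(0,1)$, there exists an instance of the problem (as a function of $n$) on which the algorithm takes $\Omega(n^{1/\epsilon})$ oracle calls to label a feasible solution whose objective value is within a multiplicative factor of $(1-\epsilon)$ with respect to the optimal value.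
   Context: The algorithm knows $\boldsymbol{v}$ and $X$ but not $\bar{\boldsymbol{w}}$; a deterministic algorithm chooses each point to label as a function only of the previously obtained labels. The asymptotic bound is in $n$ with $\epsilon$ fixed. *)

theory Defs
  imports Complex_Main
begin

type_synonym vec = "nat \<Rightarrow> real"

text \<open>Vectors of R^n are functions nat => real (only coordinates i < n matter).
  Points of {0,1}^n are represented canonically: 0/1 on coordinates < n, 0 elsewhere.\<close>

definition binvecs :: "nat \<Rightarrow> vec set" where
  "binvecs n = {x. (\<forall>i<n. x i = 0 \<or> x i = 1) \<and> (\<forall>i\<ge>n. x i = 0)}"

definition dot :: "nat \<Rightarrow> vec \<Rightarrow> vec \<Rightarrow> real" where
  "dot n a b = (\<Sum>i<n. a i * b i)"

text \<open>A deterministic algorithm: knows n, v, X, and chooses the next point to label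
  as a function of the list of previously obtained labels.\<close>
type_synonym algorithm = "nat \<Rightarrow> vec \<Rightarrow> vec set \<Rightarrow> bool list \<Rightarrow> vec"

definition member_oracle :: "nat \<Rightarrow> vec \<Rightarrow> vec \<Rightarrow> bool" where
  "member_oracle n w x \<longleftrightarrow> dot n w x \<le> 1"

fun answers :: "algorithm \<Rightarrow> nat \<Rightarrow> vec \<Rightarrow> vec set \<Rightarrow> vec \<Rightarrow> nat \<Rightarrow> bool list" where
  "answers A n v X w 0 = []"
| "answers A n v X w (Suc j) =
     answers A n v X w j @ [member_oracle n w (A n v X (answers A n v X w j))]"

text \<open>The (j+1)-th point labeled by the algorithm (j counted from 0).\<close>
definition query :: "algorithm \<Rightarrow> nat \<Rightarrow> vec \<Rightarrow> vec set \<Rightarrow> vec \<Rightarrow> nat \<Rightarrow> vec" where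
  "query A n v X w j = A n v X (answers A n v X w j)"

definition feasible :: "nat \<Rightarrow> vec set \<Rightarrow> vec \<Rightarrow> vec \<Rightarrow> bool" where
  "feasible n X w x \<longleftrightarrow> x \<in> X \<and> dot n w x \<le> 1"

definition opt :: "nat \<Rightarrow> vec \<Rightarrow> vec set \<Rightarrow> vec \<Rightarrow> real" where
  "opt n v X w = Max {dot n v x | x. feasible n X w x}"

text \<open>A valid instance: v >= 0 (so that multiplicative approximation is meaningful),
  X a subset of {0,1}^n with at least one feasible point, wbar in [0,1]^n.\<close>
definition valid_instance :: "nat \<Rightarrow> vec \<Rightarrow> vec set \<Rightarrow> vec \<Rightarrow> bool" where
  "valid_instance n v X w \<longleftrightarrow>
     (\<forall>i<n. 0 \<le> v i) \<and> (\<forall>i<n. 0 \<le> w i \<and> w i \<le> 1) \<and>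
     X \<subseteq> binvecs n \<and> (\<exists>x. feasible n X w x)"

definition good :: "nat \<Rightarrow> vec \<Rightarrow> vec set \<Rightarrow> vec \<Rightarrow> real \<Rightarrow> vec \<Rightarrow> bool" where
  "good n v X w \<epsilon> x \<longleftrightarrow> feasible n X w x \<and> dot n v x \<ge> (1 - \<epsilon>) * opt n v X w"

definition valid_algorithm :: "algorithm \<Rightarrow> bool" where
  "valid_algorithm A \<longleftrightarrow> (\<forall>n v X h. X \<noteq> {} \<longrightarrow> A n v X h \<in> X)"

end

theory Submission
  imports Defs
begin

definition ind :: "nat set \<Rightarrow> vec" where
  "ind S = (\<lambda>i. if i \<in> S then 1 else 0)"

lemma ind_inj: "ind S = ind S' \<Longrightarrow> S = S'"
proof -
  assume h: "ind S = ind S'"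
  show "S = S'"
  proof (rule set_eqI)
    fix i
    have "ind S i = ind S' i" using h by simp
    thus "i \<in> S \<longleftrightarrow> i \<in> S'" unfolding ind_def by (auto split: if_splits)
  qed
qed

lemma dot_ind: "S \<subseteq> {..<n} \<Longrightarrow> dot n w (ind S) = sum w S"
proof -
  assume S: "S \<subseteq> {..<n}"
  have "dot n w (ind S) = (\<Sum>i<n. if i \<in> S then w i else 0)"
    unfolding dot_def ind_def by (intro sum.cong) auto
  also have "\<dots> = sum w ({..<n} \<inter> S)"
    by (simp add: sum.inter_restrict)
  also have "{..<n} \<inter> S = S" using S by auto
  finally show ?thesis .
qed

lemma dot_zero: "dot n w (\<lambda>_. 0) = 0"
  unfolding dot_def by simp

lemma answers_eq:
  assumes "\<And>i. i < j \<Longrightarrow> member_oracle n w1 (query A n v X w2 i) = member_oracle n w2 (query A n v X w2 i)"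
  shows "answers A n v X w1 j = answers A n v X w2 j"
  using assms
proof (induction j)
  case 0
  then show ?case by simp
next
  case (Suc j)
  have IH: "answers A n v X w1 j = answers A n v X w2 j" using Suc by auto
  have "member_oracle n w1 (query A n v X w2 j) = member_oracle n w2 (query A n v X w2 j)"
    using Suc.prems by auto
  then show ?case using IH by (simp add: query_def)
qed

lemma heavy:
  fixes T S :: "nat set" and k :: nat
  assumes T: "T \<subseteq> {..<n}" "card T = k" and S: "S \<subseteq> {..<n}" "card S = k"
    and ne: "S \<noteq> T" and k2: "2 \<le> k"
  shows "dot n (\<lambda>i. if i \<in> T then 1 / real k else 1) (ind S) > 1"
proof -
  have fS: "finite S" using S(1) finite_subset by blast
  have fT: "finite T" using T(1) finite_subset by blast
  have "dot n (\<lambda>i. if i \<in> T then 1 / real k else 1) (ind S)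
        = (\<Sum>i\<in>S. if i \<in> T then 1 / real k else 1)" using dot_ind[OF S(1)] by simp
  also have "\<dots> = (\<Sum>i\<in>S \<inter> T. 1 / real k) + (\<Sum>i\<in>S - T. 1)"
  proof -
    have "(\<Sum>i\<in>S. if i \<in> T then 1 / real k else (1::real))
       = (\<Sum>i\<in>S \<inter> T. if i \<in> T then 1 / real k else 1) + (\<Sum>i\<in>S - T. if i \<in> T then 1 / real k else 1)"
      using fS by (rule sum.Int_Diff)
    then show ?thesis by simp
  qed
  also have "\<dots> = real (card (S \<inter> T)) / real k + real (card (S - T))" by simp
  finally have eq: "dot n (\<lambda>i. if i \<in> T then 1 / real k else 1) (ind S) = real (card (S \<inter> T)) / real k + real (card (S - T))" .
  have sum: "card (S \<inter> T) + card (S - T) = k"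
    using S(2) fS by (metis card_Int_Diff) 
  have b1: "card (S - T) \<ge> 1"
  proof (rule ccontr)
    assume "\<not> card (S - T) \<ge> 1"
    then have "card (S - T) = 0" by simp
    then have "S - T = {}" using fS by simp
    then have "S \<subseteq> T" by auto
    then have "S = T" using fT S(2) T(2) by (simp add: card_subset_eq)
    then show False using ne by simp
  qed
  show ?thesis
  proof (cases "card (S - T) \<ge> 2")
    case True
    have "real (card (S \<inter> T)) / real k \<ge> 0" by simp
    moreover have "real (card (S - T)) \<ge> 2" using True by simp
    ultimately show ?thesis unfolding eq by linarith
  next
    case False
    then have "card (S - T) = 1" using b1 by simp
    then have "card (S \<inter> T) \<ge> 1" using sum k2 by simp
    then have "real (card (S \<inter> T)) / real k > 0" using k2 by simp
    then show ?thesis unfolding eq using \<open>card (S - T) = 1\<close> by simp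
  qed
qed

lemma growth:
  fixes e :: real and k n :: nat
  assumes e: "0 < e" and k2: "2 \<le> k" and ek: "1 / e \<le> real (k - 2)"
    and n: "2 * k ^ k + 1 \<le> n"
  shows "real (nat \<lceil>real n powr (1 / e)\<rceil>) < real (n choose k)"
proof -
  have n1: "real n \<ge> 1" using n by simp
  have kn: "k \<le> n"
  proof -
    have "k < 2 ^ k" by (rule less_exp)
    also have "(2::nat) ^ k \<le> k ^ k" using k2 by (simp add: power_mono)
    finally show ?thesis using n by simp
  qed
  have "real (nat \<lceil>real n powr (1 / e)\<rceil>) \<le> real n powr (1 / e) + 1"
  proof -
    have x0: "real n powr (1 / e) \<ge> 0" by simp
    have "real (nat \<lceil>real n powr (1 / e)\<rceil>) = real_of_int \<lceil>real n powr (1 / e)\<rceil>"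
      using x0 by simp
    also have "\<dots> \<le> real n powr (1 / e) + 1" by linarith
    finally show ?thesis .
  qed
  also have "real n powr (1 / e) \<le> real n powr (real (k - 2))"
    using n1 ek by (intro powr_mono) auto
  also have "real n powr (real (k - 2)) = real n ^ (k - 2)"
    using n1 by (simp add: powr_realpow)
  finally have A: "real (nat \<lceil>real n powr (1 / e)\<rceil>) \<le> real n ^ (k - 2) + 1" by simp
  have p1: "real n ^ (k - 2) \<ge> 1" using n1 by simp
  have kk: "real k ^ k > 0" using k2 by simp
  have "real n ^ k = real n ^ (k - 2) * real n ^ 2"
    using k2 by (metis le_add_diff_inverse2 power_add)
  also have "real n ^ 2 \<ge> real n" using n1 by (simp add: power2_eq_square)
  hence "real n ^ (k - 2) * real n ^ 2 \<ge> real n ^ (k - 2) * real n" using p1 by (intro mult_left_mono) auto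
  moreover have "real n > 2 * real k ^ k"
  proof -
    have "real (2 * k ^ k + 1) \<le> real n" using n by (simp only: of_nat_le_iff)
    then show ?thesis by simp
  qed
  ultimately have "real n ^ k > real n ^ (k - 2) * (2 * real k ^ k)"
  proof -
    assume a: "real n ^ (k - 2) * real n \<le> real n ^ (k - 2) * (real n)\<^sup>2" and b: "2 * real k ^ k < real n"
    have "real n ^ (k - 2) * (2 * real k ^ k) < real n ^ (k - 2) * real n"
      using b p1 by (intro mult_strict_left_mono) linarith+
    also note a
    also have "real n ^ (k - 2) * (real n)\<^sup>2 = real n ^ k" using \<open>real n ^ k = _\<close> by simp
    finally show ?thesis .
  qed
  hence "(real n / real k) ^ k > 2 * real n ^ (k - 2)"
    using kk by (simp add: power_divide pos_less_divide_eq mult.commute mult.left_commute)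
  moreover have "(real n / real k) ^ k \<le> real (n choose k)"
    using binomial_ge_n_over_k_pow_k[OF kn] by simp
  ultimately show ?thesis using A p1 by linarith
qed

lemma exists_T:
  fixes Q :: "vec set"
  assumes "finite Q" "card Q < n choose k"
  shows "\<exists>T. T \<subseteq> {..<n} \<and> card T = k \<and> ind T \<notin> Q"
proof (rule ccontr)
  assume "\<not> ?thesis"
  then have sub: "ind ` {S. S \<subseteq> {..<n} \<and> card S = k} \<subseteq> Q" by auto
  have "inj_on ind {S. S \<subseteq> {..<n} \<and> card S = k}" using ind_inj by (meson inj_onI)
  then have "card {S. S \<subseteq> {..<n} \<and> card S = k} \<le> card Q"
    using card_inj_on_le sub assms(1) by (metis (no_types, lifting) card_image card_mono)
  moreover have "card {S. S \<subseteq> {..<n} \<and> card S = k} = n choose k"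
    using n_subsets[of "{..<n}" k] by simp
  ultimately show False using assms(2) by simp
qed

lemma va_mem: "valid_algorithm A \<Longrightarrow> X \<noteq> {} \<Longrightarrow> A n v X h \<in> X"
  unfolding valid_algorithm_def by blast

theorem theorem1:
  fixes A :: algorithm and \<epsilon> :: real
  assumes "valid_algorithm A" and "0 < \<epsilon>" and "\<epsilon> < 1"
  shows "\<exists>v X w. (\<forall>n. valid_instance n (v n) (X n) (w n)) \<and>
           (\<exists>c>0. \<forall>\<^sub>F n in sequentially. \<forall>j.
              real (Suc j) < c * real n powr (1 / \<epsilon>) \<longrightarrow>
              \<not> good n (v n) (X n) (w n) \<epsilon> (query A n (v n) (X n) (w n) j))"
proof -
  define k where "k = nat \<lceil>1 / \<epsilon>\<rceil> + 2"
  have k2: "2 \<le> k" unfolding k_def by simp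
  have ek: "1 / \<epsilon> \<le> real (k - 2)"
  proof -
    have "k - 2 = nat \<lceil>1 / \<epsilon>\<rceil>" unfolding k_def by simp
    then show ?thesis using real_nat_ceiling_ge[of "1 / \<epsilon>"] by simp
  qed
  define Xs where "Xs n = insert (\<lambda>_::nat. 0::real) (ind ` {S. S \<subseteq> {..<n} \<and> card S = k})" for n
  define v where "v n = (\<lambda>_::nat. 1::real)" for n :: nat
  define wf where "wf = (\<lambda>_::nat. 1::real)"
  define N where "N n = nat \<lceil>real n powr (1 / \<epsilon>)\<rceil>" for n
  define Q where "Q n = (\<lambda>j. query A n (v n) (Xs n) wf j) ` {..<N n}" for n
  define T where "T n = (SOME T. T \<subseteq> {..<n} \<and> card T = k \<and> ind T \<notin> Q n)" for n
  define w where "w n = (\<lambda>i. if i \<in> T n then 1 / real k else 1)" for n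
  have Xne: "Xs n \<noteq> {}" for n unfolding Xs_def by simp
  have qX: "A n (v n) (Xs n) h \<in> Xs n" for n h
    by (rule va_mem[OF assms(1) Xne])
  have fin: "finite (Xs n)" for n
    unfolding Xs_def by simp
  have valid: "valid_instance n (v n) (Xs n) (w n)" for n
  proof -
    have "Xs n \<subseteq> binvecs n"
      unfolding Xs_def binvecs_def ind_def by auto
    moreover have "feasible n (Xs n) (w n) (\<lambda>_. 0)"
      unfolding feasible_def Xs_def by (simp add: dot_zero)
    moreover have "\<forall>i<n. 0 \<le> w n i \<and> w n i \<le> 1"
      unfolding w_def using k2 by auto
    moreover have "\<forall>i<n. 0 \<le> v n i" unfolding v_def by simp
    ultimately show ?thesis unfolding valid_instance_def by (intro conjI) (assumption | rule exI)+
  qed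
  have main: "\<not> good n (v n) (Xs n) (w n) \<epsilon> (query A n (v n) (Xs n) (w n) j)"
    if nlarge: "2 * k ^ k + 1 \<le> n" and jN: "j < N n" for n j
  proof -
    have "real (N n) < real (n choose k)"
      unfolding N_def using growth[OF assms(2) k2 ek nlarge] .
    moreover have "card (Q n) \<le> N n" unfolding Q_def
      using card_image_le[of "{..<N n}"] by auto
    ultimately have "card (Q n) < n choose k" by linarith
    then have "\<exists>T. T \<subseteq> {..<n} \<and> card T = k \<and> ind T \<notin> Q n"
      by (intro exists_T) (auto simp: Q_def)
    then have T: "T n \<subseteq> {..<n}" "card (T n) = k" "ind (T n) \<notin> Q n"
      unfolding T_def by (metis (mono_tags, lifting) someI_ex)+
    have orc: "member_oracle n (w n) x = member_oracle n wf x"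
      if xX: "x \<in> Xs n" and xT: "x \<noteq> ind (T n)" for x
    proof (cases "x = (\<lambda>_. 0)")
      case True
      then show ?thesis unfolding member_oracle_def by (simp add: dot_zero)
    next
      case False
      then obtain S where S: "S \<subseteq> {..<n}" "card S = k" "x = ind S"
        using xX unfolding Xs_def by auto
      have "S \<noteq> T n" using S xT by auto
      then have "dot n (w n) x > 1" unfolding w_def using heavy[OF T(1,2) S(1,2) _ k2] S(3) by simp
      moreover have "dot n wf x > 1"
        using dot_ind[OF S(1), of wf] S k2 unfolding wf_def by simp
      ultimately show ?thesis unfolding member_oracle_def by simp
    qed
    have qeq: "query A n (v n) (Xs n) (w n) i = query A n (v n) (Xs n) wf i" if "i \<le> j" for i
    proof -
      have "answers A n (v n) (Xs n) (w n) i = answers A n (v n) (Xs n) wf i"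
      proof (rule answers_eq)
        fix i' assume "i' < i"
        then have "query A n (v n) (Xs n) wf i' \<in> Q n" using that jN unfolding Q_def by auto
        then have "query A n (v n) (Xs n) wf i' \<noteq> ind (T n)" using T(3) by auto
        moreover have "query A n (v n) (Xs n) wf i' \<in> Xs n" unfolding query_def using qX by simp
        ultimately show "member_oracle n (w n) (query A n (v n) (Xs n) wf i') =
              member_oracle n wf (query A n (v n) (Xs n) wf i')" using orc by blast
      qed
      then show ?thesis unfolding query_def by simp
    qed
    define q where "q = query A n (v n) (Xs n) (w n) j"
    have qQ: "q \<in> Q n" unfolding q_def qeq[OF order_refl] Q_def using jN by auto
    have qT: "q \<noteq> ind (T n)" using qQ T(3) by auto
    have qXs: "q \<in> Xs n" unfolding q_def query_def using qX by simp
    have Tfeas: "feasible n (Xs n) (w n) (ind (T n))"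
    proof -
      have "dot n (w n) (ind (T n)) = (\<Sum>i\<in>T n. 1 / real k)"
        using dot_ind[OF T(1)] unfolding w_def by simp
      also have "\<dots> = 1" using T(2) k2 by simp
      finally show ?thesis unfolding feasible_def Xs_def using T(1,2) by auto
    qed
    have optge: "opt n (v n) (Xs n) (w n) \<ge> real k"
    proof -
      have "finite {dot n (v n) x | x. feasible n (Xs n) (w n) x}"
      proof -
        have "{dot n (v n) x | x. feasible n (Xs n) (w n) x} \<subseteq> (\<lambda>x. dot n (v n) x) ` Xs n"
          unfolding feasible_def by auto
        then show ?thesis using fin finite_subset by blast
      qed
      moreover have "dot n (v n) (ind (T n)) \<in> {dot n (v n) x | x. feasible n (Xs n) (w n) x}"
        using Tfeas by blast
      moreover have "dot n (v n) (ind (T n)) = real k"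
        using dot_ind[OF T(1)] T(2) unfolding v_def by simp
      ultimately show ?thesis unfolding opt_def using Max_ge by fastforce
    qed
    show ?thesis
    proof (cases "q = (\<lambda>_. 0)")
      case True
      have "dot n (v n) q = 0" using True by (simp add: dot_zero)
      moreover have "(1 - \<epsilon>) * opt n (v n) (Xs n) (w n) > 0"
      proof (rule mult_pos_pos)
        show "0 < 1 - \<epsilon>" using assms(3) by simp
        have "real k \<ge> 2" using k2 by simp
        then show "0 < opt n (v n) (Xs n) (w n)" using optge by linarith
      qed
      ultimately show ?thesis unfolding good_def q_def[symmetric] by simp
    next
      case False
      then have "q \<noteq> ind (T n)" "q \<in> Xs n" using qT qXs by auto
      then obtain S where S: "S \<subseteq> {..<n}" "card S = k" "q = ind S"
        using False unfolding Xs_def by auto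
      have "S \<noteq> T n" using S qT by auto
      then have "dot n (w n) q > 1" unfolding w_def using heavy[OF T(1,2) S(1,2) _ k2] S(3) by simp
      then show ?thesis unfolding good_def feasible_def q_def[symmetric] by simp
    qed
  qed
  show ?thesis
  proof (rule exI[of _ v], rule exI[of _ Xs], rule exI[of _ w], rule conjI)
    show "\<forall>n. valid_instance n (v n) (Xs n) (w n)" using valid by blast
    show "\<exists>c>0. \<forall>\<^sub>F n in sequentially. \<forall>j.
              real (Suc j) < c * real n powr (1 / \<epsilon>) \<longrightarrow>
              \<not> good n (v n) (Xs n) (w n) \<epsilon> (query A n (v n) (Xs n) (w n) j)"
    proof (intro exI[of _ 1] conjI)
      show "(0::real) < 1" by simp
      show "\<forall>\<^sub>F n in sequentially. \<forall>j.
              real (Suc j) < 1 * real n powr (1 / \<epsilon>) \<longrightarrow>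
              \<not> good n (v n) (Xs n) (w n) \<epsilon> (query A n (v n) (Xs n) (w n) j)"
        unfolding eventually_sequentially
      proof (rule exI[of _ "2 * k ^ k + 1"], intro allI impI)
        fix n j
        assume n: "2 * k ^ k + 1 \<le> n" and j: "real (Suc j) < 1 * real n powr (1 / \<epsilon>)"
        have "real j < real_of_int \<lceil>real n powr (1 / \<epsilon>)\<rceil>"
        proof -
          have "real (Suc j) < real n powr (1 / \<epsilon>)" using j by simp
          moreover have "real n powr (1 / \<epsilon>) \<le> real_of_int \<lceil>real n powr (1 / \<epsilon>)\<rceil>"
            by (rule le_of_int_ceiling)
          ultimately show ?thesis by linarith
        qed
        then have "j < N n" unfolding N_def by linarith
        then show "\<not> good n (v n) (Xs n) (w n) \<epsilon> (query A n (v n) (Xs n) (w n) j)"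
          using main n by blast
      qed
    qed
  qed
qed

end
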